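(* Let $K, L \ge 1$ be integers, $d=\sum_{k=1}^K d_k$, and write $\bm w=[\bm w_1^{\mathsf T},\dots,\bm w_K^{\mathsf T}]^{\mathsf T}\in\mathbb R^d$ with $\bm w_k\in\mathbb R^{d_k}$. Suppose $F:\mathbb R^d\to\mathbb R$ has the form $$F(\bm w)=\frac1L\sum_{i=1}^L f_i(\bm w)+\lambda\sum_{k=1}^K r_k(\bm w),$$ where the sample losses $f_i$ have the vertical-FL structure: for each $i\in[L]$, $k\in[K]$ there are continuously differentiable local prediction functions $\bm w_k\mapsto g_k(\bm w_k,\bm x_{i,k})\in\mathbb R$ (with gradient $\nabla g_{k,i}(\bm w_k)=\partial g_k(\bm w_k,\bm x_{i,k})/\partial \bm w_k$) and a differentiable function $G_i:\mathbb R\to\mathbb R$ such that, with $s_i(\bm w)=\sum_{k=1}^K g_k(\bm w_k,\bm x_{i,k})$, $$\frac{\partial f_i(\bm w)}{\partial \bm w_k}=G_i\big(s_i(\bm w)\big)\,\nabla g_{k,i}(\bm w_k).$$ Denote $\nabla_k F(\bm w)=\partial F(\bm w)/\partial\bm w_k$. Assume $F$ is $\alpha$-strongly convex and $\beta$-smooth on $\mathbb R^d$ with $0<\alpha\le\beta$, and let $\bm w^*$ be its minimizer. Consider the noisy iteration, started from a deterministic $\bm w^{(0)}$, with learning rate $1/\beta$: $$\bm w_k^{(t+1)}=\bm w_k^{(t)}-\frac1\beta\Big(\nabla_k F(\bm w^{(t)})+\bm e_k^{(t)}\Big),\qquad \bm e_k^{(t)}=\frac1L\sum_{i=1}^L\Big(G_i'\big(s_i(\bm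 w^{(t)})\big)\,n^{(t)}_{\mathrm{UL}}(i)+n^{(t)}_{\mathrm{DL},k}(i)\Big)\nabla g_{k,i}(\bm w_k^{(t)}),$$ for $k\in[K]$, $t=0,1,\dots$, where the real random variables $n^{(t)}_{\mathrm{UL}}(i)\sim\mathcal N(0,\sigma^2_{\mathrm{UL}}(t))$ and $n^{(t)}_{\mathrm{DL},k}(i)\sim\mathcal N(0,\sigma^2_{\mathrm{DL},k}(t))$ (with deterministic variances) are all mutually independent over $i,k,t$ and between uplink and downlink. (This is the first-order model in which the device's received estimate of $G_i$ is $G_i(s_i)+G_i'(s_i)n_{\mathrm{UL}}(i)+n_{\mathrm{DL},k}(i)$.) Let $\rho=1-\alpha/\beta$ and define $$\Phi_{1,k}(t)=\sum_{i=1}^L G_i'\big(s_i(\bm w^{(t)})\big)^2\big\|\nabla g_{k,i}(\bm w^{(t)}_k)\big\|^2,\qquad \Phi_{2,k}(t)=\sum_{i=1}^L\big\|\nabla g_{k,i}(\bm w^{(t)}_k)\big\|^2$$ (for linear local predictors $g_k(\bm w_k,\bm x_{i,k})=\bm w_k^{\mathsf T}\bm x_{i,k}$ one has $\nabla g_{k,i}=\bm x_{i,k}$). Then for every $T\ge1$, $$\mathbb E\big[F(\bm w^{(T)})-F(\bm w^* )\big]\le \rho^T\big(F(\bm w^{(0)})-F(\bm w^* )\big)+\frac{3}{2L^2\beta}\,B(T),$$ where $$B(T)=\sum_{t=0}^{T-1}\rho^{T-t-1}\sum_{k=1}^K\Big(\sigma^2_{\mathrm{UL}}(t)\,\mathbb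 E[\Phi_{1,k}(t)]+\sigma^2_{\mathrm{DL},k}(t)\,\mathbb E[\Phi_{2,k}(t)]\Big).$$
   Context: Vertical federated learning: $K$ devices each hold a disjoint block $\bm x_{i,k}\in\mathbb R^{d_k}$ of the features of each of $L$ training samples and a sub-model $\bm w_k$; the server aggregates local predictions $s_i=\sum_k g_k(\bm w_k,\bm x_{i,k})$ and returns $G_i(s_i)$, from which each device forms its partial gradient. $\alpha$-strong convexity: $F(\bm y)\ge F(\bm x)+\nabla F(\bm x)^{\mathsf T}(\bm y-\bm x)+\frac\alpha2\|\bm y-\bm x\|^2$ for all $\bm x,\bm y$; $\beta$-smoothness: $F(\bm y)\le F(\bm x)+\nabla F(\bm x)^{\mathsf T}(\bm y-\bm x)+\frac\beta2\|\bm y-\bm x\|^2$ for all $\bm x,\bm y$. $\sigma^2_{\mathrm{UL}}(t)$ and $\sigma^2_{\mathrm{DL},k}(t)$ are the effective uplink and downlink communication-noise variances in round $t$; expectations are over all these noises. *)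

theory Defs
  imports "HOL-Analysis.Analysis" "HOL-Probability.Probability"
begin

text \<open>Vectors of \<open>\<real>^d\<close> are \<open>real ^ 'n\<close>; the coordinate set \<open>'n\<close> is partitioned
  into K blocks by \<open>blk :: 'n \<Rightarrow> nat\<close> (block index \<open>< K\<close>).\<close>

definition block_proj :: "('n::finite \<Rightarrow> nat) \<Rightarrow> nat \<Rightarrow> real ^ 'n \<Rightarrow> real ^ 'n" where
  "block_proj blk k w = (\<chi> j. if blk j = k then w $ j else 0)"

definition strongly_convex_grad :: "(real ^ 'n::finite \<Rightarrow> real) \<Rightarrow> (real ^ 'n \<Rightarrow> real ^ 'n) \<Rightarrow> real \<Rightarrow> bool" where
  "strongly_convex_grad F gradF \<alpha> \<longleftrightarrow>
     (\<forall>x y. F y \<ge> F x + gradF x \<bullet> (y - x) + \<alpha> / 2 * (norm (y - x))\<^sup>2)"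

definition smooth_grad :: "(real ^ 'n::finite \<Rightarrow> real) \<Rightarrow> (real ^ 'n \<Rightarrow> real ^ 'n) \<Rightarrow> real \<Rightarrow> bool" where
  "smooth_grad F gradF \<beta> \<longleftrightarrow>
     (\<forall>x y. F y \<le> F x + gradF x \<bullet> (y - x) + \<beta> / 2 * (norm (y - x))\<^sup>2)"

definition gaussian_rv :: "'a measure \<Rightarrow> ('a \<Rightarrow> real) \<Rightarrow> real \<Rightarrow> bool" where
  "gaussian_rv M X v \<longleftrightarrow> v > 0 \<and> distributed M lborel X (\<lambda>x. ennreal (normal_density 0 (sqrt v) x))"

text \<open>Index set of all noise variables: uplink noise (t, i), downlink noise (t, k, i).\<close>

datatype noise_idx = NUL nat nat | NDL nat nat nat

fun noise_family :: "(nat \<Rightarrow> nat \<Rightarrow> 'a \<Rightarrow> real) \<Rightarrow> (nat \<Rightarrow> nat \<Rightarrow> nat \<Rightarrow> 'a \<Rightarrow> real)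
    \<Rightarrow> noise_idx \<Rightarrow> 'a \<Rightarrow> real" where
  "noise_family nUL nDL (NUL t i) = nUL t i"
| "noise_family nUL nDL (NDL t k i) = nDL t k i"

definition noise_index_set :: "nat \<Rightarrow> nat \<Rightarrow> noise_idx set" where
  "noise_index_set K L = {NUL t i | t i. i < L} \<union> {NDL t k i | t k i. k < K \<and> i < L}"

end

theory Submission
  imports Defs
begin


lemma gauss_facts:
  assumes P: "prob_space M" and g: "gaussian_rv M Z v"
  shows "Z \<in> borel_measurable M" "integrable M Z" "integral\<^sup>L M Z = 0"
    "integrable M (\<lambda>\<omega>. (Z \<omega>)\<^sup>2)" "integral\<^sup>L M (\<lambda>\<omega>. (Z \<omega>)\<^sup>2) = v"
proof -
  interpret prob_space M by fact
  have v: "v > 0" and D: "distributed M lborel Z (\<lambda>x. ennreal (normal_density 0 (sqrt v) x))"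
    using g by (auto simp: gaussian_rv_def)
  have s: "sqrt v > 0" using v by simp
  show "Z \<in> borel_measurable M" using D by (auto dest: distributed_measurable)
  show "integrable M Z"
    using distributed_integrable[OF D, of "\<lambda>x. x"] integrable_normal_moment_nz_1[OF s, of 0] by simp
  show "integral\<^sup>L M Z = 0"
    using normal_distributed_expectation[OF s D] by simp
  have "integrable lborel (\<lambda>x. normal_density 0 (sqrt v) x * (x - 0)^2)"
    by (rule integrable_normal_moment[OF s])
  then show "integrable M (\<lambda>\<omega>. (Z \<omega>)\<^sup>2)"
    using distributed_integrable[OF D, of "\<lambda>x. x^2"] by simp
  have "integral\<^sup>L lborel (\<lambda>x. normal_density 0 (sqrt v) x * (x - 0)^(2*1)) = fact (2 * 1) / ((2 / (sqrt v)\<^sup>2)^1 * fact 1)"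
    by (rule integral_normal_moment_even[OF s])
  then have "integral\<^sup>L lborel (\<lambda>x. normal_density 0 (sqrt v) x * x^2) = v"
    using v by simp
  then show "integral\<^sup>L M (\<lambda>\<omega>. (Z \<omega>)\<^sup>2) = v"
    using distributed_integral[OF D, of "\<lambda>x. x^2"] by simp
qed



lemma abs_mult_le_sq: "\<bar>(a::real) * b\<bar> \<le> a\<^sup>2 + b\<^sup>2"
proof -
  have "0 \<le> (\<bar>a\<bar> - \<bar>b\<bar>)\<^sup>2" by simp
  then have "2 * (\<bar>a\<bar> * \<bar>b\<bar>) \<le> \<bar>a\<bar>\<^sup>2 + \<bar>b\<bar>\<^sup>2" by (simp add: power2_diff)
  moreover have "0 \<le> \<bar>a\<bar> * \<bar>b\<bar>" by simp
  ultimately have "\<bar>a\<bar> * \<bar>b\<bar> \<le> \<bar>a\<bar>\<^sup>2 + \<bar>b\<bar>\<^sup>2" by linarith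
  then show ?thesis by (simp add: abs_mult)
qed

lemma (in prob_space) integrable_prod_sq:
  fixes f g :: "'a \<Rightarrow> real"
  assumes "integrable M (\<lambda>\<omega>. (f \<omega>)\<^sup>2)" "integrable M (\<lambda>\<omega>. (g \<omega>)\<^sup>2)"
    "f \<in> borel_measurable M" "g \<in> borel_measurable M"
  shows "integrable M (\<lambda>\<omega>. f \<omega> * g \<omega>)"
proof (rule Bochner_Integration.integrable_bound[where f="\<lambda>\<omega>. (f \<omega>)\<^sup>2 + (g \<omega>)\<^sup>2"])
  show "integrable M (\<lambda>\<omega>. (f \<omega>)\<^sup>2 + (g \<omega>)\<^sup>2)" using assms by auto
  show "(\<lambda>\<omega>. f \<omega> * g \<omega>) \<in> borel_measurable M" using assms by auto
  show "AE x in M. norm (f x * g x) \<le> norm ((f x)\<^sup>2 + (g x)\<^sup>2)"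
    using abs_mult_le_sq by auto
qed

lemma (in prob_space) key_single:
  fixes X1 :: "'a \<Rightarrow> 'b" and X2 :: "'a \<Rightarrow> 'b" and y :: "'l \<Rightarrow> 'b \<Rightarrow> real" and z :: "'l \<Rightarrow> 'b \<Rightarrow> real"
  assumes ind: "indep_var N1 X1 N2 X2" and S: "finite S"
    and y: "\<And>l. l \<in> S \<Longrightarrow> y l \<in> borel_measurable N1"
    and z: "\<And>l. l \<in> S \<Longrightarrow> z l \<in> borel_measurable N2"
    and zsq: "\<And>l. l \<in> S \<Longrightarrow> integrable M (\<lambda>\<omega>. (z l (X2 \<omega>))\<^sup>2)"
    and zcov: "\<And>l l'. l \<in> S \<Longrightarrow> l' \<in> S \<Longrightarrow> (\<integral>\<omega>. z l (X2 \<omega>) * z l' (X2 \<omega>) \<partial>M) = (if l = l' then v l else 0)"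
    and v: "\<And>l. l \<in> S \<Longrightarrow> v l > 0"
  shows "(\<integral>\<^sup>+\<omega>. ennreal ((\<Sum>l\<in>S. y l (X1 \<omega>) * z l (X2 \<omega>))\<^sup>2) \<partial>M)
     \<le> (\<Sum>l\<in>S. ennreal (v l) * (\<integral>\<^sup>+\<omega>. ennreal ((y l (X1 \<omega>))\<^sup>2) \<partial>M))"
proof (cases "\<exists>l\<in>S. (\<integral>\<^sup>+\<omega>. ennreal ((y l (X1 \<omega>))\<^sup>2) \<partial>M) = \<infinity>")
  case True
  then obtain l where l: "l \<in> S" "(\<integral>\<^sup>+\<omega>. ennreal ((y l (X1 \<omega>))\<^sup>2) \<partial>M) = \<infinity>" by blast
  have "ennreal (v l) * (\<integral>\<^sup>+\<omega>. ennreal ((y l (X1 \<omega>))\<^sup>2) \<partial>M) = \<infinity>"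
    using l v[OF l(1)] by (simp add: ennreal_mult_top)
  moreover have "ennreal (v l) * (\<integral>\<^sup>+\<omega>. ennreal ((y l (X1 \<omega>))\<^sup>2) \<partial>M)
      \<le> (\<Sum>l\<in>S. ennreal (v l) * (\<integral>\<^sup>+\<omega>. ennreal ((y l (X1 \<omega>))\<^sup>2) \<partial>M))"
    by (rule member_le_sum) (use S l in auto)
  ultimately show ?thesis by (simp add: top_unique)
next
  case False
  have X1[measurable]: "X1 \<in> measurable M N1" using ind by (rule indep_var_rv1)
  have X2[measurable]: "X2 \<in> measurable M N2" using ind by (rule indep_var_rv2)
  define Y where "Y l \<omega> = y l (X1 \<omega>)" for l \<omega>
  define Z where "Z l \<omega> = z l (X2 \<omega>)" for l \<omega>
  have Ym: "Y l \<in> borel_measurable M" if "l \<in> S" for l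
    unfolding Y_def using y[OF that] by measurable
  have Zm: "Z l \<in> borel_measurable M" if "l \<in> S" for l
    unfolding Z_def using z[OF that] by measurable
  have Yint: "integrable M (\<lambda>\<omega>. (Y l \<omega>)\<^sup>2)" if l: "l \<in> S" for l
  proof (rule integrableI_nonneg)
    show "(\<lambda>\<omega>. (Y l \<omega>)\<^sup>2) \<in> borel_measurable M" using Ym[OF l] by measurable
    show "AE x in M. 0 \<le> (Y l x)\<^sup>2" by simp
    show "(\<integral>\<^sup>+ x. ennreal ((Y l x)\<^sup>2) \<partial>M) < \<infinity>"
      using False l by (auto simp: Y_def less_top)
  qed
  have Zint: "integrable M (\<lambda>\<omega>. (Z l \<omega>)\<^sup>2)" if l: "l \<in> S" for l
    using zsq[OF l] by (simp add: Z_def)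
  have YY: "integrable M (\<lambda>\<omega>. Y l \<omega> * Y l' \<omega>)" if "l \<in> S" "l' \<in> S" for l l'
    using that by (intro integrable_prod_sq Yint Ym)
  have ZZ: "integrable M (\<lambda>\<omega>. Z l \<omega> * Z l' \<omega>)" if "l \<in> S" "l' \<in> S" for l l'
    using that by (intro integrable_prod_sq Zint Zm)
  have ind2: "indep_var borel (\<lambda>\<omega>. Y l \<omega> * Y l' \<omega>) borel (\<lambda>\<omega>. Z l \<omega> * Z l' \<omega>)"
    if "l \<in> S" "l' \<in> S" for l l'
  proof -
    have m1: "(\<lambda>x. y l x * y l' x) \<in> borel_measurable N1" using y that by measurable
    have m2: "(\<lambda>x. z l x * z l' x) \<in> borel_measurable N2" using z that by measurable
    show ?thesis
      using indep_var_compose[OF ind m1 m2] by (simp add: comp_def Y_def Z_def)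
  qed
  have prodint: "integrable M (\<lambda>\<omega>. (Y l \<omega> * Y l' \<omega>) * (Z l \<omega> * Z l' \<omega>))"
    and prodeq: "(\<integral>\<omega>. (Y l \<omega> * Y l' \<omega>) * (Z l \<omega> * Z l' \<omega>) \<partial>M)
       = (\<integral>\<omega>. Y l \<omega> * Y l' \<omega> \<partial>M) * (if l = l' then v l else 0)"
    if "l \<in> S" "l' \<in> S" for l l'
    using indep_var_integrable[OF ind2[OF that] YY[OF that] ZZ[OF that]]
      indep_var_lebesgue_integral[OF ind2[OF that] YY[OF that] ZZ[OF that]]
      zcov[OF that] by (simp_all add: Z_def)
  have sq: "(\<Sum>l\<in>S. Y l \<omega> * Z l \<omega>)\<^sup>2 = (\<Sum>l\<in>S. \<Sum>l'\<in>S. (Y l \<omega> * Y l' \<omega>) * (Z l \<omega> * Z l' \<omega>))" for \<omega>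
    by (simp add: power2_eq_square sum_product mult_ac)
  have intsum: "integrable M (\<lambda>\<omega>. \<Sum>l\<in>S. \<Sum>l'\<in>S. (Y l \<omega> * Y l' \<omega>) * (Z l \<omega> * Z l' \<omega>))"
    by (intro Bochner_Integration.integrable_sum prodint)
  have "(\<integral>\<^sup>+\<omega>. ennreal ((\<Sum>l\<in>S. y l (X1 \<omega>) * z l (X2 \<omega>))\<^sup>2) \<partial>M)
      = (\<integral>\<^sup>+\<omega>. ennreal (\<Sum>l\<in>S. \<Sum>l'\<in>S. (Y l \<omega> * Y l' \<omega>) * (Z l \<omega> * Z l' \<omega>)) \<partial>M)"
    using sq by (simp add: Y_def Z_def)
  also have "\<dots> = ennreal (\<integral>\<omega>. (\<Sum>l\<in>S. \<Sum>l'\<in>S. (Y l \<omega> * Y l' \<omega>) * (Z l \<omega> * Z l' \<omega>)) \<partial>M)"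
    by (rule nn_integral_eq_integral[OF intsum]) (auto simp: sq[symmetric])
  also have "(\<integral>\<omega>. (\<Sum>l\<in>S. \<Sum>l'\<in>S. (Y l \<omega> * Y l' \<omega>) * (Z l \<omega> * Z l' \<omega>)) \<partial>M)
      = (\<Sum>l\<in>S. \<Sum>l'\<in>S. (\<integral>\<omega>. (Y l \<omega> * Y l' \<omega>) * (Z l \<omega> * Z l' \<omega>) \<partial>M))"
    using prodint by (simp add: integral_sum integrable_sum)
  also have "\<dots> = (\<Sum>l\<in>S. \<Sum>l'\<in>S. (if l = l' then (\<integral>\<omega>. Y l \<omega> * Y l' \<omega> \<partial>M) * v l else 0))"
    by (intro sum.cong refl) (simp add: prodeq)
  also have "\<dots> = (\<Sum>l\<in>S. v l * (\<integral>\<omega>. (Y l \<omega>)\<^sup>2 \<partial>M))"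
    using S by (intro sum.cong refl) (simp add: sum.delta power2_eq_square)
  also have "ennreal \<dots> = (\<Sum>l\<in>S. ennreal (v l * (\<integral>\<omega>. (Y l \<omega>)\<^sup>2 \<partial>M)))"
    by (rule sum_ennreal[symmetric], rule mult_nonneg_nonneg) (auto intro: less_imp_le v integral_nonneg_AE)
  also have "\<dots> = (\<Sum>l\<in>S. ennreal (v l) * ennreal (\<integral>\<omega>. (Y l \<omega>)\<^sup>2 \<partial>M))"
    by (intro sum.cong refl ennreal_mult integral_nonneg_AE less_imp_le v) auto
  also have "\<dots> = (\<Sum>l\<in>S. ennreal (v l) * (\<integral>\<^sup>+\<omega>. ennreal ((y l (X1 \<omega>))\<^sup>2) \<partial>M))"
    by (intro sum.cong refl arg_cong2[where f="(*)"]) (auto simp: Y_def[symmetric] intro!: nn_integral_eq_integral[symmetric] Yint)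
  finally show ?thesis by simp
qed

lemma (in prob_space) key_block:
  fixes X1 :: "'a \<Rightarrow> 'b" and X2 :: "'a \<Rightarrow> 'b" and y :: "'l \<Rightarrow> 'j \<Rightarrow> 'b \<Rightarrow> real" and z :: "'l \<Rightarrow> 'b \<Rightarrow> real"
  assumes ind: "indep_var N1 X1 N2 X2" and S: "finite S" and J: "finite J"
    and y: "\<And>l j. l \<in> S \<Longrightarrow> y l j \<in> borel_measurable N1"
    and z: "\<And>l. l \<in> S \<Longrightarrow> z l \<in> borel_measurable N2"
    and zsq: "\<And>l. l \<in> S \<Longrightarrow> integrable M (\<lambda>\<omega>. (z l (X2 \<omega>))\<^sup>2)"
    and zcov: "\<And>l l'. l \<in> S \<Longrightarrow> l' \<in> S \<Longrightarrow> (\<integral>\<omega>. z l (X2 \<omega>) * z l' (X2 \<omega>) \<partial>M) = (if l = l' then v l else 0)"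
    and v: "\<And>l. l \<in> S \<Longrightarrow> v l > 0"
  shows "(\<integral>\<^sup>+\<omega>. ennreal (\<Sum>j\<in>J. (\<Sum>l\<in>S. y l j (X1 \<omega>) * z l (X2 \<omega>))\<^sup>2) \<partial>M)
     \<le> (\<Sum>l\<in>S. ennreal (v l) * (\<integral>\<^sup>+\<omega>. ennreal (\<Sum>j\<in>J. (y l j (X1 \<omega>))\<^sup>2) \<partial>M))"
proof -
  have X1[measurable]: "X1 \<in> measurable M N1" using ind by (rule indep_var_rv1)
  have X2[measurable]: "X2 \<in> measurable M N2" using ind by (rule indep_var_rv2)
  have m1: "(\<lambda>\<omega>. ennreal ((\<Sum>l\<in>S. y l j (X1 \<omega>) * z l (X2 \<omega>))\<^sup>2)) \<in> borel_measurable M" for j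
  proof -
    have "(\<lambda>\<omega>. (\<Sum>l\<in>S. y l j (X1 \<omega>) * z l (X2 \<omega>))) \<in> borel_measurable M"
      by (intro borel_measurable_sum borel_measurable_times measurable_compose[OF X1 y] measurable_compose[OF X2 z])
    then show ?thesis by measurable
  qed
  have m2: "(\<lambda>\<omega>. ennreal ((y l j (X1 \<omega>))\<^sup>2)) \<in> borel_measurable M" if "l \<in> S" for l j
    using measurable_compose[OF X1 y[OF that]] by measurable
  have "(\<integral>\<^sup>+\<omega>. ennreal (\<Sum>j\<in>J. (\<Sum>l\<in>S. y l j (X1 \<omega>) * z l (X2 \<omega>))\<^sup>2) \<partial>M)
      = (\<integral>\<^sup>+\<omega>. (\<Sum>j\<in>J. ennreal ((\<Sum>l\<in>S. y l j (X1 \<omega>) * z l (X2 \<omega>))\<^sup>2)) \<partial>M)"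
    by (intro nn_integral_cong) (simp add: sum_ennreal)
  also have "\<dots> = (\<Sum>j\<in>J. \<integral>\<^sup>+\<omega>. ennreal ((\<Sum>l\<in>S. y l j (X1 \<omega>) * z l (X2 \<omega>))\<^sup>2) \<partial>M)"
    by (rule nn_integral_sum) (use m1 in auto)
  also have "\<dots> \<le> (\<Sum>j\<in>J. \<Sum>l\<in>S. ennreal (v l) * (\<integral>\<^sup>+\<omega>. ennreal ((y l j (X1 \<omega>))\<^sup>2) \<partial>M))"
    by (intro sum_mono key_single[OF ind S _ z zsq zcov v]) (auto intro: y)
  also have "\<dots> = (\<Sum>l\<in>S. ennreal (v l) * (\<Sum>j\<in>J. \<integral>\<^sup>+\<omega>. ennreal ((y l j (X1 \<omega>))\<^sup>2) \<partial>M))"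
    by (subst sum.swap) (simp add: sum_distrib_left)
  also have "\<dots> = (\<Sum>l\<in>S. ennreal (v l) * (\<integral>\<^sup>+\<omega>. ennreal (\<Sum>j\<in>J. (y l j (X1 \<omega>))\<^sup>2) \<partial>M))"
  proof (intro sum.cong refl arg_cong2[where f="(*)"])
    fix l assume l: "l \<in> S"
    have "(\<Sum>j\<in>J. \<integral>\<^sup>+\<omega>. ennreal ((y l j (X1 \<omega>))\<^sup>2) \<partial>M) = (\<integral>\<^sup>+\<omega>. (\<Sum>j\<in>J. ennreal ((y l j (X1 \<omega>))\<^sup>2)) \<partial>M)"
      by (rule nn_integral_sum[symmetric]) (use m2 l in auto)
    also have "\<dots> = (\<integral>\<^sup>+\<omega>. ennreal (\<Sum>j\<in>J. (y l j (X1 \<omega>))\<^sup>2) \<partial>M)"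
      by (intro nn_integral_cong) (simp add: sum_ennreal)
    finally show "(\<Sum>j\<in>J. \<integral>\<^sup>+\<omega>. ennreal ((y l j (X1 \<omega>))\<^sup>2) \<partial>M) = (\<integral>\<^sup>+\<omega>. ennreal (\<Sum>j\<in>J. (y l j (X1 \<omega>))\<^sup>2) \<partial>M)" .
  qed
  finally show ?thesis .
qed



lemma vec_lambda_measurable:
  fixes f :: "'a \<Rightarrow> 'n::finite \<Rightarrow> real"
  assumes "\<And>j. (\<lambda>x. f x j) \<in> borel_measurable M"
  shows "(\<lambda>x. (\<chi> j. f x j)) \<in> borel_measurable M"
proof -
  have e: "(\<lambda>x. (\<chi> j. f x j)) = (\<lambda>x. \<Sum>j\<in>UNIV. f x j *\<^sub>R axis j 1)"
  proof
    fix x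
    have "(\<chi> j. f x j) = (\<Sum>j\<in>UNIV. ((\<chi> j. f x j) $ j) *s axis j (1::real))"
      by (rule basis_expansion[symmetric])
    then show "(\<chi> j. f x j) = (\<Sum>j\<in>UNIV. f x j *\<^sub>R axis j 1)"
      by (simp add: scalar_mult_eq_scaleR)
  qed
  show ?thesis unfolding e
    by (intro borel_measurable_sum borel_measurable_scaleR assms borel_measurable_const)
qed

lemma vec_nth_measurable:
  fixes f :: "'a \<Rightarrow> real ^ 'n::finite"
  assumes "f \<in> borel_measurable M"
  shows "(\<lambda>x. f x $ j) \<in> borel_measurable M"
proof -
  have e: "(\<lambda>x. f x $ j) = (\<lambda>x. f x \<bullet> axis j 1)" by (simp add: inner_axis)
  show ?thesis unfolding e by (rule borel_measurable_inner[OF assms borel_measurable_const])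
qed


lemma deriv_seq:
  fixes \<phi> :: "real \<Rightarrow> real"
  assumes "(\<phi> has_field_derivative D) (at z)"
  shows "(\<lambda>n. (\<phi> (z + inverse (real (Suc n))) - \<phi> z) / inverse (real (Suc n))) \<longlonglongrightarrow> D"
proof -
  have lim: "((\<lambda>y. (\<phi> y - \<phi> z) / (y - z)) \<longlongrightarrow> D) (at z)"
    using assms by (simp add: has_field_derivative_iff)
  have t: "(\<lambda>n. z + inverse (real (Suc n))) \<longlonglongrightarrow> z + 0"
    by (rule tendsto_add[OF tendsto_const LIMSEQ_inverse_real_of_nat])
  have ev: "eventually (\<lambda>n. z + inverse (real (Suc n)) \<noteq> z) sequentially"
    by (intro always_eventually allI) simp
  have f: "filterlim (\<lambda>n. z + inverse (real (Suc n))) (at z) sequentially"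
    using filterlim_atI[OF _ ev] t by simp
  have "(\<lambda>n. (\<phi> (z + inverse (real (Suc n))) - \<phi> z) / ((z + inverse (real (Suc n))) - z)) \<longlonglongrightarrow> D"
    by (rule filterlim_compose[OF lim f])
  then show ?thesis by simp
qed

lemma deriv_measurable:
  fixes f :: "real \<Rightarrow> real"
  assumes d: "\<And>z. f differentiable (at z)"
  shows "deriv f \<in> borel_measurable borel"
proof (rule borel_measurable_LIMSEQ_real)
  fix z :: real
  show "(\<lambda>n. (f (z + inverse (real (Suc n))) - f z) / inverse (real (Suc n))) \<longlonglongrightarrow> deriv f z"
    by (rule deriv_seq) (use d DERIV_deriv_iff_real_differentiable in blast)
next
  fix n
  have c: "continuous_on UNIV f"
    using d by (meson continuous_at_imp_continuous_on differentiable_imp_continuous_within)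
  then have [measurable]: "f \<in> borel_measurable borel" by (rule borel_measurable_continuous_onI)
  show "(\<lambda>z. (f (z + inverse (real (Suc n))) - f z) / inverse (real (Suc n))) \<in> borel_measurable borel"
    by measurable
qed

lemma grad_measurable:
  fixes F :: "real ^ 'n::finite \<Rightarrow> real" and gF :: "real ^ 'n \<Rightarrow> real ^ 'n"
  assumes d: "\<And>x. (F has_derivative (\<lambda>h. gF x \<bullet> h)) (at x)"
  shows "gF \<in> borel_measurable borel"
proof -
  have c: "continuous_on UNIV F"
    by (intro continuous_at_imp_continuous_on ballI has_derivative_continuous[OF d])
  then have Fm[measurable]: "F \<in> borel_measurable borel" by (rule borel_measurable_continuous_onI)
  have comp: "(\<lambda>x. gF x \<bullet> v) \<in> borel_measurable borel" for v
  proof (rule borel_measurable_LIMSEQ_real)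
    fix x :: "real ^ 'n"
    have l: "((\<lambda>h. x + h *\<^sub>R v) has_derivative (\<lambda>h. h *\<^sub>R v)) (at 0)"
      by (auto intro!: derivative_eq_intros)
    have "((F \<circ> (\<lambda>h. x + h *\<^sub>R v)) has_derivative ((\<lambda>h. gF x \<bullet> h) \<circ> (\<lambda>h. h *\<^sub>R v))) (at 0)"
      using diff_chain_at[OF l, of F "\<lambda>h. gF x \<bullet> h"] d[of x] by simp
    then have "((\<lambda>h. F (x + h *\<^sub>R v)) has_derivative (\<lambda>h. h * (gF x \<bullet> v))) (at 0)"
      by (simp add: comp_def)
    then have "((\<lambda>h. F (x + h *\<^sub>R v)) has_field_derivative (gF x \<bullet> v)) (at 0)"
      by (rule has_derivative_imp_has_field_derivative) simp
    from deriv_seq[OF this]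
    show "(\<lambda>n. (F (x + (0 + inverse (real (Suc n))) *\<^sub>R v) - F (x + 0 *\<^sub>R v)) / inverse (real (Suc n))) \<longlonglongrightarrow> gF x \<bullet> v" .
  next
    fix n
    have m: "(\<lambda>x. x + (0 + inverse (real (Suc n))) *\<^sub>R v) \<in> borel_measurable borel"
      by (intro borel_measurable_add borel_measurable_const measurable_ident_sets refl)
    show "(\<lambda>x. (F (x + (0 + inverse (real (Suc n))) *\<^sub>R v) - F (x + 0 *\<^sub>R v)) / inverse (real (Suc n))) \<in> borel_measurable borel"
      using measurable_compose[OF m Fm] by (intro borel_measurable_divide borel_measurable_diff borel_measurable_const) simp_all
  qed
  have e: "gF = (\<lambda>x. \<chi> j. gF x \<bullet> axis j 1)"
    by (simp add: vec_eq_iff inner_axis fun_eq_iff)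
  show ?thesis
    by (subst e, rule vec_lambda_measurable, rule comp)
qed



lemma descent:
  fixes F :: "real ^ 'n::finite \<Rightarrow> real" and gF :: "real ^ 'n \<Rightarrow> real ^ 'n"
  assumes sc: "strongly_convex_grad F gF \<alpha>" and sm: "smooth_grad F gF \<beta>"
    and a: "0 < \<alpha>" "\<alpha> \<le> \<beta>" and ws: "\<forall>x. F ws \<le> F x"
  shows "F (x - (1/\<beta>) *\<^sub>R (gF x + e)) - F ws \<le> (1 - \<alpha>/\<beta>) * (F x - F ws) + (norm e)\<^sup>2 / (2*\<beta>)"
proof -
  have b: "0 < \<beta>" using a by linarith
  define g where "g = gF x"
  define y where "y = x - (1/\<beta>) *\<^sub>R (g + e)"
  have "F y \<le> F x + g \<bullet> (y - x) + \<beta> / 2 * (norm (y - x))\<^sup>2"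
    using sm unfolding smooth_grad_def g_def by blast
  also have "y - x = - ((1/\<beta>) *\<^sub>R (g + e))" by (simp add: y_def)
  also have "g \<bullet> (- ((1/\<beta>) *\<^sub>R (g + e))) = - (1/\<beta>) * (g \<bullet> g + g \<bullet> e)"
    by (simp add: inner_add_right)
  also have "(norm (- ((1/\<beta>) *\<^sub>R (g + e))))\<^sup>2 = (1/\<beta>)\<^sup>2 * (g \<bullet> g + 2 * (g \<bullet> e) + e \<bullet> e)"
  proof -
    have "(norm (- ((1/\<beta>) *\<^sub>R (g + e))))\<^sup>2 = (1/\<beta>)\<^sup>2 * (norm (g + e))\<^sup>2"
      by (simp add: power_divide power2_abs)
    also have "(norm (g + e))\<^sup>2 = g \<bullet> g + 2 * (g \<bullet> e) + e \<bullet> e"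
      by (simp add: power2_norm_eq_inner inner_add_left inner_add_right inner_commute)
    finally show ?thesis .
  qed
  finally have F0: "F y \<le> F x + - (1/\<beta>) * (g \<bullet> g + g \<bullet> e) + \<beta> / 2 * ((1/\<beta>)\<^sup>2 * (g \<bullet> g + 2 * (g \<bullet> e) + e \<bullet> e))" .
  have eq: "F x + - (1/\<beta>) * (g \<bullet> g + g \<bullet> e) + \<beta> / 2 * ((1/\<beta>)\<^sup>2 * (g \<bullet> g + 2 * (g \<bullet> e) + e \<bullet> e))
     = F x - (g \<bullet> g) / (2*\<beta>) + (e \<bullet> e) / (2*\<beta>)"
    using b by (simp add: power2_eq_square field_simps)
  have F1: "F y \<le> F x - (g \<bullet> g) / (2*\<beta>) + (e \<bullet> e) / (2*\<beta>)"
    using F0 eq by linarith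
  define p where "p = g \<bullet> (ws - x)"
  define N where "N = (norm (ws - x))\<^sup>2"
  have h1: "F x + p + \<alpha> / 2 * N \<le> F ws"
    using sc unfolding strongly_convex_grad_def g_def p_def N_def by blast
  have h2: "0 \<le> g \<bullet> g + 2 * \<alpha> * p + \<alpha>\<^sup>2 * N"
  proof -
    define d where "d = ws - x"
    have "0 \<le> (norm (g + \<alpha> *\<^sub>R d))\<^sup>2" by simp
    also have "(norm (g + \<alpha> *\<^sub>R d))\<^sup>2 = g \<bullet> g + 2 * \<alpha> * (g \<bullet> d) + \<alpha>\<^sup>2 * (norm d)\<^sup>2"
      unfolding power2_norm_eq_inner by (simp add: inner_add_left inner_add_right inner_commute power2_eq_square algebra_simps)
    finally show ?thesis unfolding d_def p_def N_def .
  qed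
  have h3: "2 * \<alpha> * (F x + p + \<alpha> / 2 * N) \<le> 2 * \<alpha> * F ws"
    using h1 a by (intro mult_left_mono) auto
  have h4: "2 * \<alpha> * F x + 2 * \<alpha> * p + \<alpha>\<^sup>2 * N \<le> 2 * \<alpha> * F ws"
    using h3 by (simp add: algebra_simps power2_eq_square)
  have "g \<bullet> g \<ge> 2 * \<alpha> * F x - 2 * \<alpha> * F ws" using h2 h4 by linarith
  then have "g \<bullet> g \<ge> 2 * \<alpha> * (F x - F ws)" by (simp add: algebra_simps)
  then have "(2 * \<alpha> * (F x - F ws)) / (2*\<beta>) \<le> (g \<bullet> g) / (2*\<beta>)"
    using b by (intro divide_right_mono) auto
  moreover have "(2 * \<alpha> * (F x - F ws)) / (2*\<beta>) = (\<alpha>/\<beta>) * (F x - F ws)"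
    using b by (simp add: field_simps)
  ultimately have "(g \<bullet> g) / (2*\<beta>) \<ge> (\<alpha>/\<beta>) * (F x - F ws)" by simp
  then show ?thesis
    using F1 b by (simp add: y_def g_def power2_norm_eq_inner algebra_simps)
qed



lemma iterate:
  fixes D q :: "nat \<Rightarrow> real"
  assumes step: "\<And>t. D (Suc t) \<le> \<rho> * D t + q t" and r: "0 \<le> \<rho>"
  shows "D T \<le> \<rho>^T * D 0 + (\<Sum>t<T. \<rho>^(T - t - 1) * q t)"
proof (induction T)
  case 0 then show ?case by simp
next
  case (Suc T)
  have eq: "\<rho> * (\<Sum>t<T. \<rho>^(T - t - 1) * q t) = (\<Sum>t<T. \<rho>^(Suc T - t - 1) * q t)"
    unfolding sum_distrib_left
  proof (intro sum.cong refl)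
    fix t assume "t \<in> {..<T}"
    then have "Suc T - t - 1 = Suc (T - t - 1)" by auto
    then show "\<rho> * (\<rho> ^ (T - t - 1) * q t) = \<rho> ^ (Suc T - t - 1) * q t" by simp
  qed
  have "D (Suc T) \<le> \<rho> * D T + q T" by (rule step)
  also have "\<dots> \<le> \<rho> * (\<rho>^T * D 0 + (\<Sum>t<T. \<rho>^(T - t - 1) * q t)) + q T"
    using Suc r by (intro add_right_mono mult_left_mono) auto
  also have "\<dots> = \<rho> * (\<rho>^T * D 0) + \<rho> * (\<Sum>t<T. \<rho>^(T - t - 1) * q t) + q T"
    by (simp only: distrib_left)
  also have "\<dots> = \<rho>^Suc T * D 0 + ((\<Sum>t<T. \<rho>^(Suc T - t - 1) * q t) + \<rho>^(Suc T - T - 1) * q T)"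
    by (simp only: eq) simp
  also have "\<dots> = \<rho>^Suc T * D 0 + (\<Sum>t<Suc T. \<rho>^(Suc T - t - 1) * q t)"
    by (simp only: sum.lessThan_Suc)
  finally show ?case .
qed

definition Hf :: "nat \<Rightarrow> ('n::finite \<Rightarrow> nat) \<Rightarrow> (nat \<Rightarrow> real \<Rightarrow> real) \<Rightarrow> (nat \<Rightarrow> real^'n \<Rightarrow> real)
   \<Rightarrow> (nat \<Rightarrow> nat \<Rightarrow> real^'n \<Rightarrow> real^'n) \<Rightarrow> real^'n \<Rightarrow> (nat \<Rightarrow> real) \<Rightarrow> (nat \<Rightarrow> nat \<Rightarrow> real) \<Rightarrow> real^'n" where
  "Hf L blk G s dg u a b = (\<chi> j. \<Sum>i<L. (deriv (G i) (s i u) * a i + b (blk j) i) * dg (blk j) i u $ j)"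

lemma Hf_measurable:
  assumes u: "u \<in> borel_measurable N" and dG: "\<And>i. i<L \<Longrightarrow> deriv (G i) \<in> borel_measurable borel"
    and s: "\<And>i. i<L \<Longrightarrow> s i \<in> borel_measurable borel"
    and dg: "\<And>k i. k<K \<Longrightarrow> i<L \<Longrightarrow> dg k i \<in> borel_measurable borel" and blk: "\<And>j. blk j < K"
    and a: "\<And>i. i<L \<Longrightarrow> a i \<in> borel_measurable N" and b: "\<And>k i. k<K \<Longrightarrow> i<L \<Longrightarrow> b k i \<in> borel_measurable N"
  shows "(\<lambda>x. Hf L blk G s dg (u x) (\<lambda>i. a i x) (\<lambda>k i. b k i x)) \<in> borel_measurable N"
  unfolding Hf_def
proof (rule vec_lambda_measurable)
  fix j
  show "(\<lambda>x. \<Sum>i<L. (deriv (G i) (s i (u x)) * a i x + b (blk j) i x) * dg (blk j) i (u x) $ j) \<in> borel_measurable N"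
  proof (rule borel_measurable_sum)
    fix i assume "i \<in> {..<L}"
    then have i: "i < L" by simp
    have m1: "(\<lambda>x. deriv (G i) (s i (u x))) \<in> borel_measurable N"
      using measurable_compose[OF measurable_compose[OF u s[OF i]] dG[OF i]] .
    have m2: "(\<lambda>x. dg (blk j) i (u x) $ j) \<in> borel_measurable N"
      by (rule vec_nth_measurable[OF measurable_compose[OF u dg[OF blk i]]])
    show "(\<lambda>x. (deriv (G i) (s i (u x)) * a i x + b (blk j) i x) * dg (blk j) i (u x) $ j) \<in> borel_measurable N"
      by (intro borel_measurable_times borel_measurable_add m1 m2 a[OF i] b[OF blk i])
  qed
qed

lemma Hf_cong:
  assumes "\<And>i. i<L \<Longrightarrow> a i = a' i" "\<And>k i. k<K \<Longrightarrow> i<L \<Longrightarrow> b k i = b' k i" "\<And>j. blk j < K"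
  shows "Hf L blk G s dg u a b = Hf L blk G s dg u a' b'"
  unfolding Hf_def
  by (rule arg_cong[where f=vec_lambda], rule ext, rule sum.cong) (auto simp: assms)

lemma sum_nn_cmult:
  fixes f :: "'i \<Rightarrow> 'a \<Rightarrow> real"
  assumes I: "finite I" and m: "\<And>i. i\<in>I \<Longrightarrow> f i \<in> borel_measurable M"
    and nn: "\<And>i \<omega>. i\<in>I \<Longrightarrow> 0 \<le> f i \<omega>" and c: "0 \<le> c"
  shows "(\<Sum>i\<in>I. \<integral>\<^sup>+\<omega>. ennreal (c * f i \<omega>) \<partial>M) = ennreal c * (\<integral>\<^sup>+\<omega>. ennreal (\<Sum>i\<in>I. f i \<omega>) \<partial>M)"
proof -
  have "(\<Sum>i\<in>I. \<integral>\<^sup>+\<omega>. ennreal (c * f i \<omega>) \<partial>M) = (\<Sum>i\<in>I. \<integral>\<^sup>+\<omega>. ennreal c * ennreal (f i \<omega>) \<partial>M)"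
    by (intro sum.cong refl nn_integral_cong) (simp add: ennreal_mult c nn)
  also have "\<dots> = (\<Sum>i\<in>I. ennreal c * \<integral>\<^sup>+\<omega>. ennreal (f i \<omega>) \<partial>M)"
    by (intro sum.cong refl nn_integral_cmult) (use m in auto)
  also have "\<dots> = ennreal c * (\<Sum>i\<in>I. \<integral>\<^sup>+\<omega>. ennreal (f i \<omega>) \<partial>M)"
    by (simp add: sum_distrib_left)
  also have "(\<Sum>i\<in>I. \<integral>\<^sup>+\<omega>. ennreal (f i \<omega>) \<partial>M) = (\<integral>\<^sup>+\<omega>. (\<Sum>i\<in>I. ennreal (f i \<omega>)) \<partial>M)"
    by (rule nn_integral_sum[symmetric]) (use m in auto)
  also have "\<dots> = (\<integral>\<^sup>+\<omega>. ennreal (\<Sum>i\<in>I. f i \<omega>) \<partial>M)"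
    by (intro nn_integral_cong) (simp add: nn)
  finally show ?thesis .
qed

fun tm :: "noise_idx \<Rightarrow> nat" where
  "tm (NUL t i) = t"
| "tm (NDL t k i) = t"



theorem theorem1:
  fixes K L :: nat
    and blk :: "'n::finite \<Rightarrow> nat"
    and F :: "real ^ 'n \<Rightarrow> real" and gradF :: "real ^ 'n \<Rightarrow> real ^ 'n"
    and f :: "nat \<Rightarrow> real ^ 'n \<Rightarrow> real" and r :: "nat \<Rightarrow> real ^ 'n \<Rightarrow> real"
    and lam :: real
    and g :: "nat \<Rightarrow> nat \<Rightarrow> real ^ 'n \<Rightarrow> real" and dg :: "nat \<Rightarrow> nat \<Rightarrow> real ^ 'n \<Rightarrow> real ^ 'n"
    and G :: "nat \<Rightarrow> real \<Rightarrow> real"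
    and s :: "nat \<Rightarrow> real ^ 'n \<Rightarrow> real"
    and \<alpha> \<beta> :: real and wstar w0 :: "real ^ 'n"
    and M :: "'a measure"
    and nUL :: "nat \<Rightarrow> nat \<Rightarrow> 'a \<Rightarrow> real" and nDL :: "nat \<Rightarrow> nat \<Rightarrow> nat \<Rightarrow> 'a \<Rightarrow> real"
    and vUL :: "nat \<Rightarrow> real" and vDL :: "nat \<Rightarrow> nat \<Rightarrow> real"
    and w :: "nat \<Rightarrow> 'a \<Rightarrow> real ^ 'n"
    and T :: nat
  assumes K_pos: "K \<ge> 1" and L_pos: "L \<ge> 1"
    and blk_range: "\<forall>j. blk j < K"
    \<comment> \<open>local predictors: g k i w depends only on the block w_k, is continuously differentiable,
        with gradient dg k i\<close>
    and g_local: "\<forall>k<K. \<forall>i<L. \<forall>x. g k i x = g k i (block_proj blk k x)"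
    and g_deriv: "\<forall>k<K. \<forall>i<L. \<forall>x. (g k i has_derivative (\<lambda>h. dg k i x \<bullet> h)) (at x)"
    and dg_cont: "\<forall>k<K. \<forall>i<L. continuous_on UNIV (dg k i)"
    and G_diff: "\<forall>i<L. \<forall>z. G i differentiable (at z)"
    and s_def: "\<forall>i<L. \<forall>x. s i x = (\<Sum>k<K. g k i x)"
    \<comment> \<open>sample losses: block k of the gradient of f_i is G_i(s_i(w)) * grad g_{k,i}(w_k)\<close>
    and f_deriv: "\<forall>i<L. \<forall>x. (f i has_derivative
         (\<lambda>h. (\<chi> j. G i (s i x) * dg (blk j) i x $ j) \<bullet> h)) (at x)"
    and F_def: "\<forall>x. F x = (1 / real L) * (\<Sum>i<L. f i x) + lam * (\<Sum>k<K. r k x)"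
    and F_deriv: "\<forall>x. (F has_derivative (\<lambda>h. gradF x \<bullet> h)) (at x)"
    and \<alpha>_pos: "0 < \<alpha>" and \<alpha>_le_\<beta>: "\<alpha> \<le> \<beta>"
    and F_sc: "strongly_convex_grad F gradF \<alpha>"
    and F_smooth: "smooth_grad F gradF \<beta>"
    and wstar_min: "\<forall>x. F wstar \<le> F x"
    \<comment> \<open>noise model\<close>
    and M_prob: "prob_space M"
    and nUL_gauss: "\<forall>t. \<forall>i<L. gaussian_rv M (nUL t i) (vUL t)"
    and nDL_gauss: "\<forall>t. \<forall>k<K. \<forall>i<L. gaussian_rv M (nDL t k i) (vDL k t)"
    and noise_indep: "prob_space.indep_vars M (\<lambda>_. borel) (noise_family nUL nDL) (noise_index_set K L)"
    \<comment> \<open>the noisy iteration, step size 1/beta, deterministic start\<close>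
    and w_0: "\<forall>\<omega>. w 0 \<omega> = w0"
    and w_Suc: "\<forall>t \<omega>. w (Suc t) \<omega> = (\<chi> j. w t \<omega> $ j - (1 / \<beta>) *
         (gradF (w t \<omega>) $ j +
          (1 / real L) * (\<Sum>i<L. (deriv (G i) (s i (w t \<omega>)) * nUL t i \<omega> + nDL t (blk j) i \<omega>)
                                 * dg (blk j) i (w t \<omega>) $ j)))"
    and T_pos: "T \<ge> 1"
  shows "(\<integral>\<^sup>+ \<omega>. ennreal (F (w T \<omega>) - F wstar) \<partial>M)
     \<le> ennreal ((1 - \<alpha> / \<beta>) ^ T * (F w0 - F wstar))
       + ennreal (3 / (2 * (real L)\<^sup>2 * \<beta>)) *
         (\<Sum>t<T. ennreal ((1 - \<alpha> / \<beta>) ^ (T - t - 1)) *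
            (\<Sum>k<K. ennreal (vUL t) *
                       (\<integral>\<^sup>+ \<omega>. ennreal (\<Sum>i<L. (deriv (G i) (s i (w t \<omega>)))\<^sup>2 * (norm (dg k i (w t \<omega>)))\<^sup>2) \<partial>M)
                     + ennreal (vDL k t) *
                       (\<integral>\<^sup>+ \<omega>. ennreal (\<Sum>i<L. (norm (dg k i (w t \<omega>)))\<^sup>2) \<partial>M)))"
proof -
  interpret prob_space M by (rule M_prob)
  have \<beta>_pos: "0 < \<beta>" using \<alpha>_pos \<alpha>_le_\<beta> by linarith
  define \<rho> where "\<rho> = 1 - \<alpha> / \<beta>"
  have \<rho>_nn: "0 \<le> \<rho>" using \<alpha>_le_\<beta> \<beta>_pos by (simp add: \<rho>_def field_simps)
  define nf where "nf = noise_family nUL nDL"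
  define vv where "vv l = (case l of NUL t i \<Rightarrow> vUL t | NDL t k i \<Rightarrow> vDL k t)" for l
  define Hw where "Hw t \<omega> = Hf L blk G s dg (w t \<omega>) (\<lambda>i. nUL t i \<omega>) (\<lambda>k i. nDL t k i \<omega>)" for t \<omega>
  define e where "e t \<omega> = (1 / real L) *\<^sub>R Hw t \<omega>" for t \<omega>
  have w_step: "w (Suc t) \<omega> = w t \<omega> - (1/\<beta>) *\<^sub>R (gradF (w t \<omega>) + e t \<omega>)" for t \<omega>
    using w_Suc by (simp add: vec_eq_iff e_def Hw_def Hf_def)

  have dGm: "deriv (G i) \<in> borel_measurable borel" if "i < L" for i
    by (rule deriv_measurable) (use G_diff that in auto)
  have gm: "g k i \<in> borel_measurable borel" if "k < K" "i < L" for k i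
  proof (rule borel_measurable_continuous_onI)
    show "continuous_on UNIV (g k i)"
      by (intro continuous_at_imp_continuous_on ballI has_derivative_continuous) (use g_deriv that in blast)
  qed
  have sm: "s i \<in> borel_measurable borel" if "i < L" for i
  proof -
    have "s i = (\<lambda>x. \<Sum>k<K. g k i x)" using s_def that by auto
    then show ?thesis using gm that by (simp add: borel_measurable_sum)
  qed
  have dgm: "dg k i \<in> borel_measurable borel" if "k < K" "i < L" for k i
    by (rule borel_measurable_continuous_onI) (use dg_cont that in auto)
  have gFm: "gradF \<in> borel_measurable borel"
    by (rule grad_measurable) (use F_deriv in auto)
  have gauss: "gaussian_rv M (nf l) (vv l)" if "l \<in> noise_index_set K L" for l
    using that nUL_gauss nDL_gauss by (auto simp: noise_index_set_def nf_def vv_def)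
  have nULm: "nUL t i \<in> borel_measurable M" if "i < L" for t i
    using gauss_facts(1)[OF M_prob] nUL_gauss that by blast
  have nDLm: "nDL t k i \<in> borel_measurable M" if "k < K" "i < L" for t k i
    using gauss_facts(1)[OF M_prob] nDL_gauss that by blast

  \<comment> \<open>the iterate as a deterministic function of past noise\<close>
  define I1 where "I1 t = {l \<in> noise_index_set K L. tm l < t}" for t
  define I2 where "I2 t = {l \<in> noise_index_set K L. tm l = t}" for t
  define W where "W = (\<lambda>t (x :: noise_idx \<Rightarrow> real). rec_nat w0 (\<lambda>t u. u - (1/\<beta>) *\<^sub>R (gradF u + (1 / real L) *\<^sub>R
        Hf L blk G s dg u (\<lambda>i. x (NUL t i)) (\<lambda>k i. x (NDL t k i)))) t)"
  have W0: "W 0 x = w0" for x by (simp add: W_def)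
  have WS: "W (Suc t) x = W t x - (1/\<beta>) *\<^sub>R (gradF (W t x) + (1 / real L) *\<^sub>R
        Hf L blk G s dg (W t x) (\<lambda>i. x (NUL t i)) (\<lambda>k i. x (NDL t k i)))" for t x
    by (simp add: W_def)
  have NUL_in: "NUL t i \<in> I1 (Suc t)" "NUL t i \<in> I2 t" if "i < L" for t i
    using that by (auto simp: I1_def I2_def noise_index_set_def)
  have NDL_in: "NDL t k i \<in> I1 (Suc t)" "NDL t k i \<in> I2 t" if "k < K" "i < L" for t k i
    using that by (auto simp: I1_def I2_def noise_index_set_def)
  have I1_mono: "I1 t \<subseteq> I1 (Suc t)" for t by (auto simp: I1_def)
  have W_dep: "\<forall>x x'. (\<forall>l\<in>I1 t. x l = x' l) \<longrightarrow> W t x = W t x'" for t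
  proof (induction t)
    case 0 then show ?case by (simp add: W0)
  next
    case (Suc t)
    show ?case
    proof (intro allI impI)
      fix x x' :: "noise_idx \<Rightarrow> real" assume a: "\<forall>l\<in>I1 (Suc t). x l = x' l"
      then have "W t x = W t x'" using Suc I1_mono by blast
      moreover have "Hf L blk G s dg (W t x) (\<lambda>i. x (NUL t i)) (\<lambda>k i. x (NDL t k i))
          = Hf L blk G s dg (W t x) (\<lambda>i. x' (NUL t i)) (\<lambda>k i. x' (NDL t k i))"
        by (rule Hf_cong[where K=K]) (use a NUL_in NDL_in blk_range in auto)
      ultimately show "W (Suc t) x = W (Suc t) x'" by (simp add: WS)
    qed
  qed
  have w_W: "w t \<omega> = W t (\<lambda>l. nf l \<omega>)" for t \<omega>
  proof (induction t)
    case 0 then show ?case by (simp add: W0 w_0)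
  next
    case (Suc t)
    then show ?case by (simp add: w_step WS e_def Hw_def nf_def)
  qed
  define X1 where "X1 t \<omega> = restrict (\<lambda>l. nf l \<omega>) (I1 t)" for t \<omega>
  define X2 where "X2 t \<omega> = restrict (\<lambda>l. nf l \<omega>) (I2 t)" for t \<omega>
  have w_X1: "w t \<omega> = W t (X1 t \<omega>)" for t \<omega>
    unfolding w_W using W_dep[of t] by (auto simp: X1_def)
  have W_meas: "I1 t \<subseteq> I \<Longrightarrow> W t \<in> borel_measurable (PiM I (\<lambda>_. borel))" for t I
  proof (induction t)
    case 0 then show ?case by (simp add: W0)
  next
    case (Suc t)
    then have IH: "W t \<in> borel_measurable (PiM I (\<lambda>_. borel))" using I1_mono by blast
    have H: "(\<lambda>x. Hf L blk G s dg (W t x) (\<lambda>i. x (NUL t i)) (\<lambda>k i. x (NDL t k i))) \<in> borel_measurable (PiM I (\<lambda>_. borel))"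
    proof (rule Hf_measurable[where K=K])
      show "(\<lambda>x. x (NUL t i)) \<in> borel_measurable (PiM I (\<lambda>_. borel))" if "i < L" for i
      proof -
        have "NUL t i \<in> I" using NUL_in(1)[OF that] Suc.prems by blast
        then show ?thesis by (rule measurable_component_singleton)
      qed
      show "(\<lambda>x. x (NDL t k i)) \<in> borel_measurable (PiM I (\<lambda>_. borel))" if "k < K" "i < L" for k i
      proof -
        have "NDL t k i \<in> I" using NDL_in(1)[OF that] Suc.prems by blast
        then show ?thesis by (rule measurable_component_singleton)
      qed
    qed (use IH dGm sm dgm blk_range in auto)
    have "(\<lambda>x. W t x - (1/\<beta>) *\<^sub>R (gradF (W t x) + (1 / real L) *\<^sub>R
        Hf L blk G s dg (W t x) (\<lambda>i. x (NUL t i)) (\<lambda>k i. x (NDL t k i)))) \<in> borel_measurable (PiM I (\<lambda>_. borel))"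
      by (intro borel_measurable_diff borel_measurable_scaleR borel_measurable_add borel_measurable_const
          IH H measurable_compose[OF IH gFm])
    then show ?case by (simp add: WS[abs_def])
  qed
  have ind: "indep_var (PiM (I1 t) (\<lambda>_. borel)) (X1 t) (PiM (I2 t) (\<lambda>_. borel)) (X2 t)" for t
    unfolding X1_def[abs_def] X2_def[abs_def]
    by (rule indep_var_restrict[OF noise_indep[folded nf_def]]) (auto simp: I1_def I2_def)
  have X1m: "X1 t \<in> measurable M (PiM (I1 t) (\<lambda>_. borel))" for t using ind by (rule indep_var_rv1)
  have wm: "w t \<in> borel_measurable M" for t
  proof -
    have "w t = (\<lambda>\<omega>. W t (X1 t \<omega>))" using w_X1 by auto
    then show ?thesis using measurable_compose[OF X1m W_meas[OF subset_refl]] by simp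
  qed
  have em: "e t \<in> borel_measurable M" for t
  proof -
    have "Hw t \<in> borel_measurable M"
      unfolding Hw_def[abs_def]
      by (rule Hf_measurable[where K=K]) (use wm dGm sm dgm blk_range nULm nDLm in auto)
    then show ?thesis unfolding e_def[abs_def] by (intro borel_measurable_scaleR borel_measurable_const)
  qed

  have pair: "indep_var borel (nf l) borel (nf l')"
    if "l \<in> noise_index_set K L" "l' \<in> noise_index_set K L" "l \<noteq> l'" for l l'
  proof -
    have iv: "indep_var (PiM {l} (\<lambda>_. borel)) (\<lambda>\<omega>. restrict (\<lambda>i. nf i \<omega>) {l})
        (PiM {l'} (\<lambda>_. borel)) (\<lambda>\<omega>. restrict (\<lambda>i. nf i \<omega>) {l'})"
      by (rule indep_var_restrict[OF noise_indep[folded nf_def]]) (use that in auto)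
    have m1: "(\<lambda>x. x l) \<in> measurable (PiM {l} (\<lambda>_. borel)) borel"
      using measurable_component_singleton[of l "{l}" "\<lambda>_. borel"] by simp
    have m2: "(\<lambda>x. x l') \<in> measurable (PiM {l'} (\<lambda>_. borel)) borel"
      using measurable_component_singleton[of l' "{l'}" "\<lambda>_. borel"] by simp
    have c1: "((\<lambda>x. x l) \<circ> (\<lambda>\<omega>. restrict (\<lambda>i. nf i \<omega>) {l})) = nf l" by (simp add: fun_eq_iff)
    have c2: "((\<lambda>x. x l') \<circ> (\<lambda>\<omega>. restrict (\<lambda>i. nf i \<omega>) {l'})) = nf l'" by (simp add: fun_eq_iff)
    show ?thesis using indep_var_compose[OF iv m1 m2] unfolding c1 c2 .
  qed
  have cov: "(\<integral>\<omega>. nf l \<omega> * nf l' \<omega> \<partial>M) = (if l = l' then vv l else 0)"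
    if "l \<in> noise_index_set K L" "l' \<in> noise_index_set K L" for l l'
  proof (cases "l = l'")
    case True
    then show ?thesis using gauss_facts(5)[OF M_prob gauss[OF that(1)]] by (simp add: power2_eq_square)
  next
    case False
    have "(\<integral>\<omega>. nf l \<omega> * nf l' \<omega> \<partial>M) = (\<integral>\<omega>. nf l \<omega> \<partial>M) * (\<integral>\<omega>. nf l' \<omega> \<partial>M)"
      by (rule indep_var_lebesgue_integral[OF pair[OF that False]])
        (use gauss_facts(2)[OF M_prob gauss] that in auto)
    then show ?thesis using False gauss_facts(3)[OF M_prob gauss[OF that(1)]] by simp
  qed

  have per_t: "(\<integral>\<^sup>+\<omega>. ennreal ((norm (e t \<omega>))\<^sup>2) \<partial>M) \<le> ennreal (1 / (real L)\<^sup>2) *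
      (\<Sum>k<K. ennreal (vUL t) *
                       (\<integral>\<^sup>+ \<omega>. ennreal (\<Sum>i<L. (deriv (G i) (s i (w t \<omega>)))\<^sup>2 * (norm (dg k i (w t \<omega>)))\<^sup>2) \<partial>M)
                     + ennreal (vDL k t) *
                       (\<integral>\<^sup>+ \<omega>. ennreal (\<Sum>i<L. (norm (dg k i (w t \<omega>)))\<^sup>2) \<partial>M))" for t
  proof -
    define J where "J k = {j. blk j = k}" for k
    define S where "S k = NUL t ` {..<L} \<union> NDL t k ` {..<L}" for k
    define yy where "yy k l j x = (case l of NUL t' i \<Rightarrow> deriv (G i) (s i (W t x)) * dg k i (W t x) $ j / real L
                                    | NDL t' k' i \<Rightarrow> dg k i (W t x) $ j / real L)" for k l j x
    define ec where "ec \<omega> j = e t \<omega> $ j" for \<omega> j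
    have ecm: "(\<lambda>\<omega>. ec \<omega> j) \<in> borel_measurable M" for j
      unfolding ec_def by (rule vec_nth_measurable[OF em])
    have nsplit: "(norm (e t \<omega>))\<^sup>2 = (\<Sum>k<K. \<Sum>j\<in>J k. (ec \<omega> j)\<^sup>2)" for \<omega>
    proof -
      have "(norm (e t \<omega>))\<^sup>2 = (\<Sum>j\<in>UNIV. (ec \<omega> j)\<^sup>2)"
        unfolding power2_norm_eq_inner inner_vec_def ec_def by (simp add: power2_eq_square)
      also have "\<dots> = (\<Sum>k<K. \<Sum>j\<in>J k. (ec \<omega> j)\<^sup>2)"
      proof -
        have rb: "blk ` UNIV \<subseteq> {..<K}" using blk_range by auto
        show ?thesis unfolding J_def
          using sum.group[of UNIV "{..<K}" blk "\<lambda>j. (ec \<omega> j)\<^sup>2"] rb by simp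
      qed
      finally show ?thesis .
    qed

    have SI: "l \<in> I2 t" if "l \<in> S k" "k < K" for l k
      using that NUL_in NDL_in by (auto simp: S_def)
    have I2N: "I2 t \<subseteq> noise_index_set K L" by (auto simp: I2_def)
    have X2val: "X2 t \<omega> l = nf l \<omega>" if "l \<in> I2 t" for l \<omega>
      using that by (simp add: X2_def)
    have Wt: "W t (X1 t \<omega>) = w t \<omega>" for \<omega> by (simp add: w_X1)
    have disj: "NUL t ` {..<L} \<inter> NDL t k ` {..<L} = {}" for k by auto
    have inj1: "inj_on (NUL t) {..<L}" by (auto simp: inj_on_def)
    have inj2: "inj_on (NDL t k) {..<L}" for k by (auto simp: inj_on_def)
    have sumS: "(\<Sum>l\<in>S k. h l) = (\<Sum>i<L. h (NUL t i)) + (\<Sum>i<L. h (NDL t k i))" for k and h :: "noise_idx \<Rightarrow> 'z::comm_monoid_add"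
      unfolding S_def by (simp add: sum.union_disjoint disj sum.reindex inj1 inj2)
    have ecS: "ec \<omega> j = (\<Sum>l\<in>S k. yy k l j (X1 t \<omega>) * X2 t \<omega> l)" if k: "k < K" and j: "j \<in> J k" for k \<omega> j
    proof -
      have bj: "blk j = k" using j by (simp add: J_def)
      have "(\<Sum>l\<in>S k. yy k l j (X1 t \<omega>) * X2 t \<omega> l)
          = (\<Sum>i<L. yy k (NUL t i) j (X1 t \<omega>) * X2 t \<omega> (NUL t i)) + (\<Sum>i<L. yy k (NDL t k i) j (X1 t \<omega>) * X2 t \<omega> (NDL t k i))"
        by (rule sumS)
      also have "\<dots> = (\<Sum>i<L. deriv (G i) (s i (w t \<omega>)) * dg k i (w t \<omega>) $ j / real L * nUL t i \<omega>)
                     + (\<Sum>i<L. dg k i (w t \<omega>) $ j / real L * nDL t k i \<omega>)"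
        by (intro arg_cong2[where f="(+)"] sum.cong refl)
           (auto simp: yy_def Wt X2val NUL_in NDL_in k nf_def)
      also have "\<dots> = (\<Sum>i<L. deriv (G i) (s i (w t \<omega>)) * dg k i (w t \<omega>) $ j / real L * nUL t i \<omega>
                     + dg k i (w t \<omega>) $ j / real L * nDL t k i \<omega>)"
        by (rule sum.distrib[symmetric])
      also have "\<dots> = (\<Sum>i<L. (1 / real L) * ((deriv (G i) (s i (w t \<omega>)) * nUL t i \<omega> + nDL t k i \<omega>) * dg k i (w t \<omega>) $ j))"
        by (intro sum.cong refl) (simp add: field_simps)
      also have "\<dots> = ec \<omega> j"
        by (simp add: ec_def e_def Hw_def Hf_def bj sum_distrib_left)
      finally show ?thesis by simp
    qed
    have vpos: "0 < vv l" if "l \<in> noise_index_set K L" for l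
      using gauss[OF that] by (simp add: gaussian_rv_def)
    have ym: "yy k l j \<in> borel_measurable (PiM (I1 t) (\<lambda>_. borel))" if "l \<in> S k" "k < K" for k l j
    proof -
      have Wm: "W t \<in> borel_measurable (PiM (I1 t) (\<lambda>_. borel))" by (rule W_meas) simp
      from that obtain i where i: "i < L" and l: "l = NUL t i \<or> l = NDL t k i" by (auto simp: S_def)
      have a: "(\<lambda>x. deriv (G i) (s i (W t x))) \<in> borel_measurable (PiM (I1 t) (\<lambda>_. borel))"
        using measurable_compose[OF measurable_compose[OF Wm sm[OF i]] dGm[OF i]] .
      have b: "(\<lambda>x. dg k i (W t x) $ j) \<in> borel_measurable (PiM (I1 t) (\<lambda>_. borel))"
        by (rule vec_nth_measurable[OF measurable_compose[OF Wm dgm[OF that(2) i]]])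
      from l show ?thesis
      proof
        assume "l = NUL t i"
        then have "yy k l j = (\<lambda>x. deriv (G i) (s i (W t x)) * dg k i (W t x) $ j / real L)"
          by (simp add: yy_def fun_eq_iff)
        then show ?thesis using a b by simp
      next
        assume "l = NDL t k i"
        then have "yy k l j = (\<lambda>x. dg k i (W t x) $ j / real L)"
          by (simp add: yy_def fun_eq_iff)
        then show ?thesis using b by simp
      qed
    qed
    have kb: "(\<integral>\<^sup>+\<omega>. ennreal (\<Sum>j\<in>J k. (\<Sum>l\<in>S k. yy k l j (X1 t \<omega>) * X2 t \<omega> l)\<^sup>2) \<partial>M)
        \<le> (\<Sum>l\<in>S k. ennreal (vv l) * (\<integral>\<^sup>+\<omega>. ennreal (\<Sum>j\<in>J k. (yy k l j (X1 t \<omega>))\<^sup>2) \<partial>M))"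
      if k: "k < K" for k
    proof (rule key_block[OF ind[of t], where z="\<lambda>l x. x l"])
      show "finite (S k)" by (simp add: S_def)
      show "finite (J k)" by simp
      show "yy k l j \<in> borel_measurable (PiM (I1 t) (\<lambda>_. borel))" if "l \<in> S k" for l j
        by (rule ym[OF that k])
      show "(\<lambda>x. x l) \<in> borel_measurable (PiM (I2 t) (\<lambda>_. borel))" if "l \<in> S k" for l
        using measurable_component_singleton[of l "I2 t" "\<lambda>_. borel"] SI[OF that k] by simp
      show "integrable M (\<lambda>\<omega>. (X2 t \<omega> l)\<^sup>2)" if "l \<in> S k" for l
        using gauss_facts(4)[OF M_prob gauss] SI[OF that k] I2N by (auto simp: X2val)
      show "(\<integral>\<omega>. X2 t \<omega> l * X2 t \<omega> l' \<partial>M) = (if l = l' then vv l else 0)" if "l \<in> S k" "l' \<in> S k" for l l'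
      proof -
        have a: "l \<in> noise_index_set K L" "l' \<in> noise_index_set K L"
          using SI[OF that(1) k] SI[OF that(2) k] I2N by auto
        show ?thesis using cov[OF a] SI[OF that(1) k] SI[OF that(2) k] by (simp add: X2val)
      qed
      show "0 < vv l" if "l \<in> S k" for l
        using vpos SI[OF that k] I2N by auto
    qed

    have Lpos: "0 < real L" using L_pos by simp
    have normsq: "(norm v)\<^sup>2 = (\<Sum>j\<in>UNIV. (v $ j)\<^sup>2)" for v :: "real ^ 'n"
      unfolding power2_norm_eq_inner inner_vec_def by (simp add: power2_eq_square)
    have Jle: "(\<Sum>j\<in>J k. (v $ j)\<^sup>2) \<le> (norm v)\<^sup>2" for k and v :: "real ^ 'n"
      unfolding normsq by (rule sum_mono2) auto
    define f1 where "f1 k i \<omega> = (deriv (G i) (s i (w t \<omega>)))\<^sup>2 * (norm (dg k i (w t \<omega>)))\<^sup>2" for k i \<omega>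
    define f2 where "f2 k i \<omega> = (norm (dg k i (w t \<omega>)))\<^sup>2" for k i \<omega>
    have f1m: "f1 k i \<in> borel_measurable M" if "k < K" "i < L" for k i
    proof -
      have a: "(\<lambda>\<omega>. deriv (G i) (s i (w t \<omega>))) \<in> borel_measurable M"
        using measurable_compose[OF measurable_compose[OF wm sm[OF that(2)]] dGm[OF that(2)]] .
      have b: "(\<lambda>\<omega>. dg k i (w t \<omega>)) \<in> borel_measurable M"
        using measurable_compose[OF wm dgm[OF that]] .
      show ?thesis unfolding f1_def[abs_def] using a b by measurable
    qed
    have f2m: "f2 k i \<in> borel_measurable M" if "k < K" "i < L" for k i
    proof -
      have b: "(\<lambda>\<omega>. dg k i (w t \<omega>)) \<in> borel_measurable M"
        using measurable_compose[OF wm dgm[OF that]] .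
      show ?thesis unfolding f2_def[abs_def] using b by measurable
    qed
    have rb: "(\<Sum>l\<in>S k. ennreal (vv l) * (\<integral>\<^sup>+\<omega>. ennreal (\<Sum>j\<in>J k. (yy k l j (X1 t \<omega>))\<^sup>2) \<partial>M))
        \<le> ennreal (1 / (real L)\<^sup>2) * (ennreal (vUL t) * (\<integral>\<^sup>+\<omega>. ennreal (\<Sum>i<L. f1 k i \<omega>) \<partial>M)
                                  + ennreal (vDL k t) * (\<integral>\<^sup>+\<omega>. ennreal (\<Sum>i<L. f2 k i \<omega>) \<partial>M))"
      if k: "k < K" for k
    proof -
      have p1: "(\<Sum>j\<in>J k. (yy k (NUL t i) j (X1 t \<omega>))\<^sup>2) \<le> 1 / (real L)\<^sup>2 * f1 k i \<omega>" for i \<omega>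
      proof -
        have "(\<Sum>j\<in>J k. (yy k (NUL t i) j (X1 t \<omega>))\<^sup>2)
            = 1 / (real L)\<^sup>2 * ((deriv (G i) (s i (w t \<omega>)))\<^sup>2 * (\<Sum>j\<in>J k. (dg k i (w t \<omega>) $ j)\<^sup>2))"
          by (simp add: yy_def Wt sum_distrib_left power_mult_distrib power_divide field_simps)
        also have "\<dots> \<le> 1 / (real L)\<^sup>2 * f1 k i \<omega>"
          unfolding f1_def by (intro mult_left_mono Jle) auto
        finally show ?thesis .
      qed
      have p2: "(\<Sum>j\<in>J k. (yy k (NDL t k i) j (X1 t \<omega>))\<^sup>2) \<le> 1 / (real L)\<^sup>2 * f2 k i \<omega>" for i \<omega>
      proof -
        have "(\<Sum>j\<in>J k. (yy k (NDL t k i) j (X1 t \<omega>))\<^sup>2)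
            = 1 / (real L)\<^sup>2 * (\<Sum>j\<in>J k. (dg k i (w t \<omega>) $ j)\<^sup>2)"
          by (simp add: yy_def Wt sum_distrib_left power_divide)
        also have "\<dots> \<le> 1 / (real L)\<^sup>2 * f2 k i \<omega>"
          unfolding f2_def by (intro mult_left_mono Jle) auto
        finally show ?thesis .
      qed
      have "(\<Sum>l\<in>S k. ennreal (vv l) * (\<integral>\<^sup>+\<omega>. ennreal (\<Sum>j\<in>J k. (yy k l j (X1 t \<omega>))\<^sup>2) \<partial>M))
          = (\<Sum>i<L. ennreal (vUL t) * (\<integral>\<^sup>+\<omega>. ennreal (\<Sum>j\<in>J k. (yy k (NUL t i) j (X1 t \<omega>))\<^sup>2) \<partial>M))
          + (\<Sum>i<L. ennreal (vDL k t) * (\<integral>\<^sup>+\<omega>. ennreal (\<Sum>j\<in>J k. (yy k (NDL t k i) j (X1 t \<omega>))\<^sup>2) \<partial>M))"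
        by (simp add: sumS vv_def)
      also have "\<dots> \<le> (\<Sum>i<L. ennreal (vUL t) * (\<integral>\<^sup>+\<omega>. ennreal (1 / (real L)\<^sup>2 * f1 k i \<omega>) \<partial>M))
          + (\<Sum>i<L. ennreal (vDL k t) * (\<integral>\<^sup>+\<omega>. ennreal (1 / (real L)\<^sup>2 * f2 k i \<omega>) \<partial>M))"
        by (intro add_mono sum_mono mult_left_mono nn_integral_mono ennreal_leI p1 p2) auto
      also have "\<dots> = ennreal (vUL t) * (\<Sum>i<L. \<integral>\<^sup>+\<omega>. ennreal (1 / (real L)\<^sup>2 * f1 k i \<omega>) \<partial>M)
          + ennreal (vDL k t) * (\<Sum>i<L. \<integral>\<^sup>+\<omega>. ennreal (1 / (real L)\<^sup>2 * f2 k i \<omega>) \<partial>M)"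
        by (simp add: sum_distrib_left)
      also have "(\<Sum>i<L. \<integral>\<^sup>+\<omega>. ennreal (1 / (real L)\<^sup>2 * f1 k i \<omega>) \<partial>M)
          = ennreal (1 / (real L)\<^sup>2) * (\<integral>\<^sup>+\<omega>. ennreal (\<Sum>i<L. f1 k i \<omega>) \<partial>M)"
      proof (rule sum_nn_cmult)
        show "f1 k i \<in> borel_measurable M" if "i \<in> {..<L}" for i using f1m[OF k] that by auto
      qed (auto simp: f1_def)
      also have "(\<Sum>i<L. \<integral>\<^sup>+\<omega>. ennreal (1 / (real L)\<^sup>2 * f2 k i \<omega>) \<partial>M)
          = ennreal (1 / (real L)\<^sup>2) * (\<integral>\<^sup>+\<omega>. ennreal (\<Sum>i<L. f2 k i \<omega>) \<partial>M)"
      proof (rule sum_nn_cmult)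
        show "f2 k i \<in> borel_measurable M" if "i \<in> {..<L}" for i using f2m[OF k] that by auto
      qed (auto simp: f2_def)
      finally show ?thesis by (simp add: algebra_simps)
    qed

    have "(\<integral>\<^sup>+\<omega>. ennreal ((norm (e t \<omega>))\<^sup>2) \<partial>M) = (\<integral>\<^sup>+\<omega>. (\<Sum>k<K. ennreal (\<Sum>j\<in>J k. (ec \<omega> j)\<^sup>2)) \<partial>M)"
      by (intro nn_integral_cong) (simp add: nsplit sum_nonneg)
    also have "\<dots> = (\<Sum>k<K. \<integral>\<^sup>+\<omega>. ennreal (\<Sum>j\<in>J k. (ec \<omega> j)\<^sup>2) \<partial>M)"
    proof (rule nn_integral_sum)
      fix k
      have "(\<lambda>\<omega>. \<Sum>j\<in>J k. (ec \<omega> j)\<^sup>2) \<in> borel_measurable M"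
        using ecm by (intro borel_measurable_sum borel_measurable_power) auto
      then show "(\<lambda>\<omega>. ennreal (\<Sum>j\<in>J k. (ec \<omega> j)\<^sup>2)) \<in> borel_measurable M" by measurable
    qed
    also have "\<dots> = (\<Sum>k<K. \<integral>\<^sup>+\<omega>. ennreal (\<Sum>j\<in>J k. (\<Sum>l\<in>S k. yy k l j (X1 t \<omega>) * X2 t \<omega> l)\<^sup>2) \<partial>M)"
      by (intro sum.cong refl nn_integral_cong) (auto simp: ecS)
    also have "\<dots> \<le> (\<Sum>k<K. ennreal (1 / (real L)\<^sup>2) * (ennreal (vUL t) * (\<integral>\<^sup>+\<omega>. ennreal (\<Sum>i<L. f1 k i \<omega>) \<partial>M)
                                  + ennreal (vDL k t) * (\<integral>\<^sup>+\<omega>. ennreal (\<Sum>i<L. f2 k i \<omega>) \<partial>M)))"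
      by (intro sum_mono order_trans[OF kb rb]) auto
    also have "\<dots> = ennreal (1 / (real L)\<^sup>2) * (\<Sum>k<K. ennreal (vUL t) * (\<integral>\<^sup>+\<omega>. ennreal (\<Sum>i<L. f1 k i \<omega>) \<partial>M)
                                  + ennreal (vDL k t) * (\<integral>\<^sup>+\<omega>. ennreal (\<Sum>i<L. f2 k i \<omega>) \<partial>M))"
      by (simp add: sum_distrib_left)
    finally show ?thesis unfolding f1_def f2_def .
  qed

  have pw_step: "F (w (Suc t) \<omega>) - F wstar \<le> \<rho> * (F (w t \<omega>) - F wstar) + (norm (e t \<omega>))\<^sup>2 / (2*\<beta>)" for t \<omega>
    unfolding w_step \<rho>_def by (rule descent[OF F_sc F_smooth \<alpha>_pos \<alpha>_le_\<beta> wstar_min])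
  have pw: "F (w T \<omega>) - F wstar \<le> \<rho>^T * (F w0 - F wstar) + (\<Sum>t<T. \<rho>^(T - t - 1) * ((norm (e t \<omega>))\<^sup>2 / (2*\<beta>)))" for \<omega>
    using iterate[where D="\<lambda>t. F (w t \<omega>) - F wstar" and q="\<lambda>t. (norm (e t \<omega>))\<^sup>2 / (2*\<beta>)", OF pw_step \<rho>_nn]
    by (simp add: w_0)
  have D0: "0 \<le> F w0 - F wstar" using wstar_min by simp
  define B where "B t = (\<Sum>k<K. ennreal (vUL t) *
                       (\<integral>\<^sup>+ \<omega>. ennreal (\<Sum>i<L. (deriv (G i) (s i (w t \<omega>)))\<^sup>2 * (norm (dg k i (w t \<omega>)))\<^sup>2) \<partial>M)
                     + ennreal (vDL k t) *
                       (\<integral>\<^sup>+ \<omega>. ennreal (\<Sum>i<L. (norm (dg k i (w t \<omega>)))\<^sup>2) \<partial>M))" for t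
  have per_t': "(\<integral>\<^sup>+\<omega>. ennreal ((norm (e t \<omega>))\<^sup>2) \<partial>M) \<le> ennreal (1 / (real L)\<^sup>2) * B t" for t
    unfolding B_def by (rule per_t)
  have nm: "(\<lambda>\<omega>. ennreal ((norm (e t \<omega>))\<^sup>2)) \<in> borel_measurable M" for t
    using em[of t] by measurable
  have cnn: "0 \<le> \<rho>^(T - t - 1) / (2*\<beta>)" for t using \<rho>_nn \<beta>_pos by simp
  have "(\<integral>\<^sup>+\<omega>. ennreal (F (w T \<omega>) - F wstar) \<partial>M)
      \<le> (\<integral>\<^sup>+\<omega>. ennreal (\<rho>^T * (F w0 - F wstar) + (\<Sum>t<T. \<rho>^(T - t - 1) * ((norm (e t \<omega>))\<^sup>2 / (2*\<beta>)))) \<partial>M)"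
    by (intro nn_integral_mono ennreal_leI pw)
  also have "\<dots> = (\<integral>\<^sup>+\<omega>. (ennreal (\<rho>^T * (F w0 - F wstar)) +
       (\<Sum>t<T. ennreal (\<rho>^(T - t - 1) / (2*\<beta>)) * ennreal ((norm (e t \<omega>))\<^sup>2))) \<partial>M)"
  proof (intro nn_integral_cong)
    fix \<omega>
    have "ennreal (\<rho>^T * (F w0 - F wstar) + (\<Sum>t<T. \<rho>^(T - t - 1) * ((norm (e t \<omega>))\<^sup>2 / (2*\<beta>))))
        = ennreal (\<rho>^T * (F w0 - F wstar)) + ennreal (\<Sum>t<T. \<rho>^(T - t - 1) * ((norm (e t \<omega>))\<^sup>2 / (2*\<beta>)))"
      by (rule ennreal_plus) (use \<rho>_nn D0 \<beta>_pos in \<open>auto intro!: sum_nonneg\<close>)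
    also have "ennreal (\<Sum>t<T. \<rho>^(T - t - 1) * ((norm (e t \<omega>))\<^sup>2 / (2*\<beta>)))
        = (\<Sum>t<T. ennreal (\<rho>^(T - t - 1) * ((norm (e t \<omega>))\<^sup>2 / (2*\<beta>))))"
      by (rule sum_ennreal[symmetric]) (use \<rho>_nn \<beta>_pos in auto)
    also have "\<dots> = (\<Sum>t<T. ennreal (\<rho>^(T - t - 1) / (2*\<beta>)) * ennreal ((norm (e t \<omega>))\<^sup>2))"
    proof (intro sum.cong refl)
      fix t
      have "\<rho>^(T - t - 1) * ((norm (e t \<omega>))\<^sup>2 / (2*\<beta>)) = \<rho>^(T - t - 1) / (2*\<beta>) * (norm (e t \<omega>))\<^sup>2"
        by simp
      show "ennreal (\<rho>^(T - t - 1) * ((norm (e t \<omega>))\<^sup>2 / (2*\<beta>))) = ennreal (\<rho>^(T - t - 1) / (2*\<beta>)) * ennreal ((norm (e t \<omega>))\<^sup>2)"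
        unfolding \<open>\<rho>^(T - t - 1) * ((norm (e t \<omega>))\<^sup>2 / (2*\<beta>)) = \<rho>^(T - t - 1) / (2*\<beta>) * (norm (e t \<omega>))\<^sup>2\<close>
        by (rule ennreal_mult[OF cnn[of t] zero_le_power2])
    qed
    finally show "ennreal (\<rho>^T * (F w0 - F wstar) + (\<Sum>t<T. \<rho>^(T - t - 1) * ((norm (e t \<omega>))\<^sup>2 / (2*\<beta>))))
      = ennreal (\<rho>^T * (F w0 - F wstar)) + (\<Sum>t<T. ennreal (\<rho>^(T - t - 1) / (2*\<beta>)) * ennreal ((norm (e t \<omega>))\<^sup>2))" .
  qed
  also have "\<dots> = ennreal (\<rho>^T * (F w0 - F wstar)) +
       (\<Sum>t<T. ennreal (\<rho>^(T - t - 1) / (2*\<beta>)) * (\<integral>\<^sup>+\<omega>. ennreal ((norm (e t \<omega>))\<^sup>2) \<partial>M))"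
  proof -
    have m2: "(\<lambda>\<omega>. ennreal (\<rho>^(T - t - 1) / (2*\<beta>)) * ennreal ((norm (e t \<omega>))\<^sup>2)) \<in> borel_measurable M" for t
      using nm[of t] by (rule borel_measurable_times_ennreal[OF borel_measurable_const])
    have sm2: "(\<lambda>\<omega>. \<Sum>t<T. ennreal (\<rho>^(T - t - 1) / (2*\<beta>)) * ennreal ((norm (e t \<omega>))\<^sup>2)) \<in> borel_measurable M"
      by (rule borel_measurable_sum) (rule m2)
    have "(\<integral>\<^sup>+\<omega>. (ennreal (\<rho>^T * (F w0 - F wstar)) +
       (\<Sum>t<T. ennreal (\<rho>^(T - t - 1) / (2*\<beta>)) * ennreal ((norm (e t \<omega>))\<^sup>2))) \<partial>M)
      = (\<integral>\<^sup>+\<omega>. ennreal (\<rho>^T * (F w0 - F wstar)) \<partial>M) +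
        (\<integral>\<^sup>+\<omega>. (\<Sum>t<T. ennreal (\<rho>^(T - t - 1) / (2*\<beta>)) * ennreal ((norm (e t \<omega>))\<^sup>2)) \<partial>M)"
      by (rule nn_integral_add[OF borel_measurable_const sm2])
    also have "(\<integral>\<^sup>+\<omega>. ennreal (\<rho>^T * (F w0 - F wstar)) \<partial>M) = ennreal (\<rho>^T * (F w0 - F wstar))"
      by (simp add: emeasure_space_1)
    also have "(\<integral>\<^sup>+\<omega>. (\<Sum>t<T. ennreal (\<rho>^(T - t - 1) / (2*\<beta>)) * ennreal ((norm (e t \<omega>))\<^sup>2)) \<partial>M)
        = (\<Sum>t<T. \<integral>\<^sup>+\<omega>. ennreal (\<rho>^(T - t - 1) / (2*\<beta>)) * ennreal ((norm (e t \<omega>))\<^sup>2) \<partial>M)"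
      by (rule nn_integral_sum) (rule m2)
    also have "\<dots> = (\<Sum>t<T. ennreal (\<rho>^(T - t - 1) / (2*\<beta>)) * (\<integral>\<^sup>+\<omega>. ennreal ((norm (e t \<omega>))\<^sup>2) \<partial>M))"
      by (intro sum.cong refl nn_integral_cmult nm)
    finally show ?thesis .
  qed
  also have "\<dots> \<le> ennreal (\<rho>^T * (F w0 - F wstar)) +
       (\<Sum>t<T. ennreal (\<rho>^(T - t - 1) / (2*\<beta>)) * (ennreal (1 / (real L)\<^sup>2) * B t))"
    by (intro add_left_mono sum_mono mult_left_mono per_t') auto
  also have "\<dots> \<le> ennreal (\<rho>^T * (F w0 - F wstar)) +
       ennreal (3 / (2 * (real L)\<^sup>2 * \<beta>)) * (\<Sum>t<T. ennreal (\<rho>^(T - t - 1)) * B t)"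
  proof (intro add_left_mono)
    have "(\<Sum>t<T. ennreal (\<rho>^(T - t - 1) / (2*\<beta>)) * (ennreal (1 / (real L)\<^sup>2) * B t))
        \<le> (\<Sum>t<T. ennreal (3 / (2 * (real L)\<^sup>2 * \<beta>)) * (ennreal (\<rho>^(T - t - 1)) * B t))"
    proof (rule sum_mono)
      fix t
      define a where "a = \<rho>^(T - t - 1)"
      have a0: "0 \<le> a" using \<rho>_nn by (simp add: a_def)
      have Lp: "0 < (real L)\<^sup>2" using L_pos by simp
      have r0: "0 \<le> 3 / (2 * (real L)\<^sup>2 * \<beta>) * a" using a0 Lp \<beta>_pos by simp
      have x0: "0 \<le> a / (2 * (real L)\<^sup>2 * \<beta>)" using a0 Lp \<beta>_pos by simp
      have "a / (2*\<beta>) * (1 / (real L)\<^sup>2) = a / (2 * (real L)\<^sup>2 * \<beta>)" by (simp add: field_simps)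
      also have "\<dots> \<le> 3 * (a / (2 * (real L)\<^sup>2 * \<beta>))" using x0 by linarith
      also have "\<dots> = 3 / (2 * (real L)\<^sup>2 * \<beta>) * a" by (simp add: field_simps)
      finally have le: "a / (2*\<beta>) * (1 / (real L)\<^sup>2) \<le> 3 / (2 * (real L)\<^sup>2 * \<beta>) * a" .
      have "ennreal (a / (2*\<beta>)) * (ennreal (1 / (real L)\<^sup>2) * B t) = ennreal (a / (2*\<beta>) * (1 / (real L)\<^sup>2)) * B t"
      proof -
        have "ennreal (a / (2*\<beta>) * (1 / (real L)\<^sup>2)) = ennreal (a / (2*\<beta>)) * ennreal (1 / (real L)\<^sup>2)"
          by (rule ennreal_mult) (use a0 \<beta>_pos in auto)
        then show ?thesis by (simp only: mult.assoc)
      qed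
      also have "\<dots> \<le> ennreal (3 / (2 * (real L)\<^sup>2 * \<beta>) * a) * B t"
        by (intro mult_right_mono ennreal_leI le) simp
      also have "\<dots> = ennreal (3 / (2 * (real L)\<^sup>2 * \<beta>)) * (ennreal a * B t)"
      proof -
        have "ennreal (3 / (2 * (real L)\<^sup>2 * \<beta>) * a) = ennreal (3 / (2 * (real L)\<^sup>2 * \<beta>)) * ennreal a"
          by (rule ennreal_mult) (use a0 Lp \<beta>_pos in auto)
        then show ?thesis by (simp only: mult.assoc)
      qed
      finally show "ennreal (\<rho>^(T - t - 1) / (2*\<beta>)) * (ennreal (1 / (real L)\<^sup>2) * B t)
          \<le> ennreal (3 / (2 * (real L)\<^sup>2 * \<beta>)) * (ennreal (\<rho>^(T - t - 1)) * B t)"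
        unfolding a_def .
    qed
    also have "\<dots> = ennreal (3 / (2 * (real L)\<^sup>2 * \<beta>)) * (\<Sum>t<T. ennreal (\<rho>^(T - t - 1)) * B t)"
      by (simp add: sum_distrib_left)
    finally show "(\<Sum>t<T. ennreal (\<rho>^(T - t - 1) / (2*\<beta>)) * (ennreal (1 / (real L)\<^sup>2) * B t))
        \<le> ennreal (3 / (2 * (real L)\<^sup>2 * \<beta>)) * (\<Sum>t<T. ennreal (\<rho>^(T - t - 1)) * B t)" .
  qed
  finally show ?thesis unfolding B_def \<rho>_def .
qed


end
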